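(* Let $(\Omega,\mathcal{F},(\mathcal{F}_t)_{t\in[0,T]},P)$ be a filtered probability space, $T>0$, and let $(X_t)_{t\in[0,T]}$ be a nonnegative continuous sub-martingale whose initial value $X_0$ is a deterministic constant. Let $M_t=\max_{0\le s\le t}X_s$. Let $p>0$ and suppose that $E\left(\int_0^T M_t^{2p}\,d[X,X]_t\right)<\infty$. Then $$E\left(X_T M_T^{p}\right)\ge\frac{p}{p+1}E\left(M_T^{p+1}\right)+\frac{1}{p+1}X_0^{p+1}.$$
   Context: $[X,X]_t$ denotes the quadratic variation of $X$. $M_t$ is the running maximum of $X$. *)

theory Defs
  imports "HOL-Probability.Probability"
begin

definition filtration_on :: "'a measure \<Rightarrow> real \<Rightarrow> (real \<Rightarrow> 'a measure) \<Rightarrow> bool" where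
  "filtration_on M T F \<longleftrightarrow>
     (\<forall>t\<in>{0..T}. subalgebra M (F t)) \<and>
     (\<forall>s\<in>{0..T}. \<forall>t\<in>{0..T}. s \<le> t \<longrightarrow> sets (F s) \<subseteq> sets (F t))"

definition submartingale_on ::
    "'a measure \<Rightarrow> real \<Rightarrow> (real \<Rightarrow> 'a measure) \<Rightarrow> (real \<Rightarrow> 'a \<Rightarrow> real) \<Rightarrow> bool" where
  "submartingale_on M T F X \<longleftrightarrow>
     filtration_on M T F \<and>
     (\<forall>t\<in>{0..T}. X t \<in> borel_measurable (F t)) \<and>
     (\<forall>t\<in>{0..T}. integrable M (X t)) \<and>
     (\<forall>s\<in>{0..T}. \<forall>t\<in>{0..T}. s \<le> t \<longrightarrow>
        (AE \<omega> in M. X s \<omega> \<le> real_cond_exp M (F s) (X t) \<omega>))"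

definition partition_of :: "real \<Rightarrow> real list \<Rightarrow> bool" where
  "partition_of t ps \<longleftrightarrow> ps \<noteq> [] \<and> sorted_wrt (<) ps \<and> hd ps = 0 \<and> last ps = t"

definition mesh :: "real list \<Rightarrow> real" where
  "mesh ps = Max (insert 0 {ps ! (Suc i) - ps ! i | i. Suc i < length ps})"

definition sq_incr_sum :: "(real \<Rightarrow> 'a \<Rightarrow> real) \<Rightarrow> real list \<Rightarrow> 'a \<Rightarrow> real" where
  "sq_incr_sum X ps \<omega> = (\<Sum>i<length ps - 1. (X (ps ! Suc i) \<omega> - X (ps ! i) \<omega>)\<^sup>2)"

definition converges_in_prob :: "'a measure \<Rightarrow> (nat \<Rightarrow> 'a \<Rightarrow> real) \<Rightarrow> ('a \<Rightarrow> real) \<Rightarrow> bool" where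
  "converges_in_prob M Y Z \<longleftrightarrow>
     (\<forall>\<epsilon>>0. (\<lambda>n. measure M {\<omega>\<in>space M. \<bar>Y n \<omega> - Z \<omega>\<bar> > \<epsilon>}) \<longlonglongrightarrow> 0)"

definition quadratic_variation_on ::
    "'a measure \<Rightarrow> real \<Rightarrow> (real \<Rightarrow> 'a \<Rightarrow> real) \<Rightarrow> (real \<Rightarrow> 'a \<Rightarrow> real) \<Rightarrow> bool" where
  "quadratic_variation_on M T X Q \<longleftrightarrow>
     (\<forall>\<omega>\<in>space M. continuous_on {0..T} (\<lambda>t. Q t \<omega>) \<and> mono_on {0..T} (\<lambda>t. Q t \<omega>)) \<and>
     (\<forall>t\<in>{0..T}. \<forall>P :: nat \<Rightarrow> real list.
        (\<forall>n. partition_of t (P n)) \<longrightarrow> (\<lambda>n. mesh (P n)) \<longlonglongrightarrow> 0 \<longrightarrow>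
        converges_in_prob M (\<lambda>n. sq_incr_sum X (P n)) (Q t))"

definition running_max :: "(real \<Rightarrow> 'a \<Rightarrow> real) \<Rightarrow> real \<Rightarrow> 'a \<Rightarrow> real" where
  "running_max X t \<omega> = Sup ((\<lambda>s. X s \<omega>) ` {0..t})"

text \<open>Pathwise Lebesgue--Stieltjes integral over [0,T] of a nonnegative function w.r.t.
  the nondecreasing continuous path t \<mapsto> Q t \<omega> (extended constantly outside [0,T]).\<close>
definition stieltjes_nn_integral ::
    "real \<Rightarrow> (real \<Rightarrow> real) \<Rightarrow> (real \<Rightarrow> real) \<Rightarrow> ennreal" where
  "stieltjes_nn_integral T q f =
     (\<integral>\<^sup>+ s. indicator {0..T} s * ennreal (f s) \<partial>interval_measure (\<lambda>s. q (max 0 (min T s))))"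

end

theory Submission
  imports Defs
begin

fun runmax :: "(nat \<Rightarrow> real) \<Rightarrow> nat \<Rightarrow> real" where
  "runmax y 0 = y 0"
| "runmax y (Suc k) = max (runmax y k) (y (Suc k))"

lemma runmax_ge: "j \<le> k \<Longrightarrow> y j \<le> runmax y k"
  by (induction k) (auto simp: le_Suc_eq max_def)

lemma runmax_le: "(\<And>j. j \<le> k \<Longrightarrow> y j \<le> B) \<Longrightarrow> runmax y k \<le> B"
  by (induction k) auto

lemma runmax_nonneg: "y 0 \<ge> 0 \<Longrightarrow> runmax y k \<ge> 0"
  using runmax_ge[of 0 k y] by simp

lemma young_aux:
  fixes m m' p :: real
  assumes "0 \<le> m" "m \<le> m'" "p > 0"
  shows "m' * m powr p \<le> m' powr (p+1) / (p+1) + p/(p+1) * m powr (p+1)"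
proof -
  have "m' * m powr p \<le> m' powr (p+1) / (p+1) + (m powr p) powr ((p+1)/p) / ((p+1)/p)"
    using assms by (intro Youngs_inequality) (auto simp: field_simps)
  also have "(m powr p) powr ((p+1)/p) = m powr (p+1)"
    using assms by (simp add: powr_powr)
  also have "m powr (p+1) / ((p+1)/p) = p/(p+1) * m powr (p+1)" by simp
  finally show ?thesis .
qed

lemma young_step:
  fixes m m' y p :: real
  assumes "0 \<le> m" "m \<le> m'" "m' \<le> y" "p > 0"
  shows "y * m powr p - p/(p+1) * m powr (p+1) \<le> y * m' powr p - p/(p+1) * m' powr (p+1)"
proof -
  have mm: "m powr p \<le> m' powr p" using assms by (intro powr_mono2) auto
  have "y * m' powr p - y * m powr p \<ge> m' * m' powr p - m' * m powr p"
  proof -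
    have "(y - m') * (m' powr p - m powr p) \<ge> 0" using assms mm by simp
    thus ?thesis by (simp add: algebra_simps)
  qed
  moreover have "m' * m' powr p = m' powr (p+1)"
    using assms by (cases "m' = 0") (auto simp: powr_add)
  moreover note young_aux[OF assms(1,2,4)]
  moreover have "m' powr (p+1) / (p+1) + p/(p+1) * m' powr (p+1) = m' powr (p+1)"
  proof -
    have "m' powr (p+1) / (p+1) + p/(p+1) * m' powr (p+1) = ((p+1) * m' powr (p+1)) / (p+1)"
      by (simp add: add_divide_distrib algebra_simps)
    thus ?thesis using assms by simp
  qed
  ultimately show ?thesis by (simp add: algebra_simps)
qed

definition Dv :: "real \<Rightarrow> real \<Rightarrow> (nat \<Rightarrow> real) \<Rightarrow> nat \<Rightarrow> real" where
  "Dv p K y k = y k * min (runmax y k) K powr p - p/(p+1) * min (runmax y k) K powr (p+1)"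

lemma Dv_step:
  assumes "y 0 \<ge> 0" "K \<ge> 0" "p > 0"
  shows "Dv p K y (Suc k) \<ge> Dv p K y k + (y (Suc k) - y k) * min (runmax y k) K powr p"
proof -
  let ?m = "min (runmax y k) K" and ?m' = "min (runmax y (Suc k)) K"
  have m0: "?m \<ge> 0" using runmax_nonneg[of y k] assms by simp
  have "y (Suc k) * ?m powr p - p/(p+1) * ?m powr (p+1) \<le> y (Suc k) * ?m' powr p - p/(p+1) * ?m' powr (p+1)"
  proof (cases "?m' = ?m")
    case False
    hence "?m \<le> ?m'" "?m' \<le> y (Suc k)" by (auto simp: min_def max_def split: if_splits)
    thus ?thesis using young_step[OF m0 _ _ assms(3)] by blast
  qed simp
  thus ?thesis unfolding Dv_def by (simp add: algebra_simps)
qed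

lemma Dv_tele:
  assumes "y 0 \<ge> 0" "K \<ge> 0" "p > 0"
  shows "Dv p K y N \<ge> Dv p K y 0 + (\<Sum>k<N. (y (Suc k) - y k) * min (runmax y k) K powr p)"
proof (induction N)
  case (Suc N)
  then show ?case using Dv_step[where y=y and K=K and p=p and k=N] assms by simp
qed simp


lemma grid_conv:
  fixes f :: "real \<Rightarrow> real"
  assumes cont: "continuous_on {0..T} f" and T: "T > 0"
  shows "(\<lambda>n. runmax (\<lambda>k. f (real k * T / real (Suc n))) (Suc n)) \<longlonglongrightarrow> Sup (f ` {0..T})"
proof -
  obtain s where s: "s \<in> {0..T}" "\<And>y. y \<in> {0..T} \<Longrightarrow> f y \<le> f s"
    using continuous_attains_sup[OF compact_Icc _ cont] T by auto
  have S: "Sup (f ` {0..T}) = f s"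
    using s by (intro cSup_eq_maximum) auto
  define j where "j n = nat \<lfloor>s * real (Suc n) / T\<rfloor>" for n
  define t where "t n = real (j n) * T / real (Suc n)" for n
  have tb: "s - T / real (Suc n) \<le> t n \<and> t n \<le> s" for n
  proof -
    have fl: "real_of_int \<lfloor>s * real (Suc n) / T\<rfloor> \<le> s * real (Suc n) / T"
         "s * real (Suc n) / T < real_of_int \<lfloor>s * real (Suc n) / T\<rfloor> + 1"
      by linarith+
    have nn: "\<lfloor>s * real (Suc n) / T\<rfloor> \<ge> 0" using s T by auto
    hence jr: "real (j n) = real_of_int \<lfloor>s * real (Suc n) / T\<rfloor>" unfolding j_def by simp
    have "real (j n) \<le> s * real (Suc n) / T" using fl(1) jr by simp
    hence "real (j n) * T \<le> s * real (Suc n)" using T by (simp only: pos_le_divide_eq)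
    moreover have "s * real (Suc n) / T < real (j n) + 1" using fl(2) jr by simp
    hence "s * real (Suc n) < (real (j n) + 1) * T" using T by (simp only: pos_divide_less_eq)
    ultimately have a: "real (j n) * T \<le> s * real (Suc n)" "s * real (Suc n) - T \<le> real (j n) * T"
      by (auto simp: algebra_simps)
    have N: "real (Suc n) > 0" by simp
    have "s - T / real (Suc n) = (s * real (Suc n) - T) / real (Suc n)"
      using N by (simp add: field_simps)
    also have "\<dots> \<le> t n" unfolding t_def by (intro divide_right_mono a(2)) simp
    finally have "s - T / real (Suc n) \<le> t n" .
    moreover have "t n \<le> s" unfolding t_def using a(1) N by (simp only: pos_divide_le_eq)
    ultimately show ?thesis by simp
  qed
  have tin: "t n \<in> {0..T}" for n
  proof -
    have "t n \<ge> 0" unfolding t_def using T by simp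
    thus ?thesis using tb[of n] s by auto
  qed
  have jle: "j n \<le> Suc n" for n
  proof -
    have "real (j n) * T / real (Suc n) \<le> T" using tin[of n] unfolding t_def by simp
    hence "real (j n) * T \<le> T * real (Suc n)" using T by (simp only: pos_divide_le_eq of_nat_0_less_iff zero_less_Suc)
    hence "real (j n) \<le> real (Suc n)" using T by (metis mult.commute mult_le_cancel_right_pos)
    thus ?thesis by linarith
  qed
  have "(\<lambda>n. s - T / real (Suc n)) \<longlonglongrightarrow> s - 0"
    by (intro tendsto_intros LIMSEQ_Suc[OF lim_const_over_n])
  hence lo: "(\<lambda>n. s - T / real (Suc n)) \<longlonglongrightarrow> s" by simp
  have tl: "t \<longlonglongrightarrow> s"
  proof (rule tendsto_sandwich[OF _ _ lo tendsto_const])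
    show "\<forall>\<^sub>F n in sequentially. s - T / real (Suc n) \<le> t n" using tb by simp
    show "\<forall>\<^sub>F n in sequentially. t n \<le> s" using tb by simp
  qed
  have ft: "(\<lambda>n. f (t n)) \<longlonglongrightarrow> f s"
    using continuous_on_tendsto_compose[OF cont tl s(1)] tin by auto
  show ?thesis unfolding S
  proof (rule tendsto_sandwich[OF _ _ ft tendsto_const])
    show "\<forall>\<^sub>F n in sequentially. f (t n) \<le> runmax (\<lambda>k. f (real k * T / real (Suc n))) (Suc n)"
    proof (intro always_eventually allI)
      fix n
      have "(\<lambda>k. f (real k * T / real (Suc n))) (j n) \<le> runmax (\<lambda>k. f (real k * T / real (Suc n))) (Suc n)"
        by (rule runmax_ge[OF jle])
      thus "f (t n) \<le> runmax (\<lambda>k. f (real k * T / real (Suc n))) (Suc n)" unfolding t_def by simp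
    qed
    show "\<forall>\<^sub>F n in sequentially. runmax (\<lambda>k. f (real k * T / real (Suc n))) (Suc n) \<le> f s"
    proof (intro always_eventually allI runmax_le s(2))
      fix n k assume "k \<le> Suc n"
      hence "real k * T \<le> T * real (Suc n)" using T
        by (subst mult.commute) (intro mult_left_mono, auto)
      hence "real k * T / real (Suc n) \<le> T" by (simp only: pos_divide_le_eq of_nat_0_less_iff zero_less_Suc)
      thus "real k * T / real (Suc n) \<in> {0..T}" using T by simp
    qed
  qed
qed

lemma grid_in:
  assumes "T > 0" "k \<le> N" "0 < N"
  shows "real k * T / real N \<in> {0..T}"
proof -
  have "real k * T \<le> T * real N" using assms
    by (subst mult.commute) (intro mult_left_mono, auto)
  hence "real k * T / real N \<le> T" using assms(3) by (simp only: pos_divide_le_eq of_nat_0_less_iff)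
  thus ?thesis using assms by simp
qed


lemma meas_mono:
  assumes "filtration_on M T F" "s \<in> {0..T}" "t \<in> {0..T}" "s \<le> t" "f \<in> borel_measurable (F s)"
  shows "f \<in> borel_measurable (F t)"
proof -
  have "subalgebra (F t) (F s)" using assms unfolding filtration_on_def subalgebra_def by auto
  thus ?thesis using measurable_from_subalg assms(5) by blast
qed

lemma meas_M:
  assumes "filtration_on M T F" "t \<in> {0..T}" "f \<in> borel_measurable (F t)"
  shows "f \<in> borel_measurable M"
  using assms measurable_from_subalg unfolding filtration_on_def by blast

lemma integrable_bdd_mult:
  fixes g h :: "'a \<Rightarrow> real"
  assumes "integrable M h" "g \<in> borel_measurable M" "\<And>w. w \<in> space M \<Longrightarrow> 0 \<le> g w" "\<And>w. w \<in> space M \<Longrightarrow> g w \<le> B" "space M \<noteq> {}"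
  shows "integrable M (\<lambda>w. g w * h w)"
proof (rule Bochner_Integration.integrable_bound[where f="\<lambda>w. B * h w"])
  show "integrable M (\<lambda>w. B * h w)" using assms(1) by simp
  show "(\<lambda>w. g w * h w) \<in> borel_measurable M" using assms(1,2) by measurable
  have B: "B \<ge> 0" using assms(3,4,5) order_trans by blast
  show "AE x in M. norm (g x * h x) \<le> norm (B * h x)"
    using assms(3,4) B by (auto simp: abs_mult intro!: mult_right_mono)
qed

lemma sub_step:
  assumes P: "prob_space M" and sub: "submartingale_on M T F X"
    and st: "s \<in> {0..T}" "t \<in> {0..T}" "s \<le> t"
    and g: "g \<in> borel_measurable (F s)" "\<And>w. w \<in> space M \<Longrightarrow> 0 \<le> g w" "\<And>w. w \<in> space M \<Longrightarrow> g w \<le> B"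
  shows "(\<integral>w. g w * X s w \<partial>M) \<le> (\<integral>w. g w * X t w \<partial>M)"
proof -
  interpret prob_space M by (rule P)
  have filt: "filtration_on M T F" using sub unfolding submartingale_on_def by blast
  have subs: "subalgebra M (F s)" using filt st unfolding filtration_on_def by blast
  interpret finite_measure_subalgebra M "F s" by unfold_locales (rule subs)
  have gM: "g \<in> borel_measurable M" by (rule meas_M[OF filt st(1) g(1)])
  have Xt: "X t \<in> borel_measurable M" "integrable M (X t)"
    using sub st meas_M[OF filt st(2)] unfolding submartingale_on_def by auto
  have Xs: "integrable M (X s)"
    using sub st unfolding submartingale_on_def by auto
  have it: "integrable M (\<lambda>w. g w * X t w)" by (rule integrable_bdd_mult[OF Xt(2) gM g(2,3) not_empty])
  have is': "integrable M (\<lambda>w. g w * X s w)" by (rule integrable_bdd_mult[OF Xs gM g(2,3) not_empty])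
  have ce: "integrable M (\<lambda>w. g w * real_cond_exp M (F s) (X t) w)"
    "(\<integral>w. g w * real_cond_exp M (F s) (X t) w \<partial>M) = (\<integral>w. g w * X t w \<partial>M)"
    using real_cond_exp_intg[OF it g(1) Xt(1)] by auto
  have ae: "AE w in M. X s w \<le> real_cond_exp M (F s) (X t) w"
    using sub st unfolding submartingale_on_def by auto
  have "(\<integral>w. g w * X s w \<partial>M) \<le> (\<integral>w. g w * real_cond_exp M (F s) (X t) w \<partial>M)"
    by (rule integral_mono_AE[OF is' ce(1)]) (use ae g(2) in \<open>auto intro: mult_left_mono\<close>)
  thus ?thesis using ce(2) by simp
qed


lemma discrete:
  fixes M :: "'a measure" and X :: "real \<Rightarrow> 'a \<Rightarrow> real"
  assumes P: "prob_space M" and sub: "submartingale_on M T F X" and T: "T > 0"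
    and nn: "\<forall>t\<in>{0..T}. \<forall>\<omega>\<in>space M. X t \<omega> \<ge> 0"
    and x0: "\<forall>\<omega>\<in>space M. X 0 \<omega> = x0" and p: "p > 0" and N: "N > 0"
    and K: "x0 \<le> K" and x00: "0 \<le> x0"
  defines "Y \<equiv> \<lambda>\<omega> k. X (real k * T / real N) \<omega>"
  defines "m \<equiv> \<lambda>k \<omega>. min (runmax (Y \<omega>) k) K"
  shows "integrable M (\<lambda>\<omega>. X T \<omega> * m N \<omega> powr p)"
    "integrable M (\<lambda>\<omega>. m N \<omega> powr (p+1))"
    "p/(p+1) * (\<integral>\<omega>. m N \<omega> powr (p+1) \<partial>M) + x0 powr (p+1) / (p+1)
       \<le> (\<integral>\<omega>. X T \<omega> * m N \<omega> powr p \<partial>M)"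
proof -
  interpret prob_space M by (rule P)
  have filt: "filtration_on M T F" using sub unfolding submartingale_on_def by blast
  define t where "t k = real k * T / real N" for k
  have tin: "t k \<in> {0..T}" if "k \<le> N" for k
  proof -
    have "real k * T \<le> T * real N" using that T
      by (subst mult.commute) (intro mult_left_mono, auto)
    hence "real k * T / real N \<le> T" using N by (simp only: pos_divide_le_eq of_nat_0_less_iff)
    thus ?thesis unfolding t_def using T by simp
  qed
  have tmono: "t k \<le> t (Suc k)" for k unfolding t_def using T N by (intro divide_right_mono) auto
  have tN: "t N = T" unfolding t_def using N by simp
  have t0: "t 0 = 0" unfolding t_def by simp
  have Xmeas: "X s \<in> borel_measurable (F s)" "integrable M (X s)" if "s \<in> {0..T}" for s
    using sub that unfolding submartingale_on_def by auto
  have Yt: "Y \<omega> k = X (t k) \<omega>" for \<omega> k unfolding Y_def t_def by simp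
  have rm_meas: "(\<lambda>\<omega>. runmax (Y \<omega>) k) \<in> borel_measurable (F (t k))" if "k \<le> N" for k
    using that
  proof (induction k)
    case 0
    then show ?case using Xmeas[of 0] t0 T by (simp add: Yt)
  next
    case (Suc k)
    have a: "(\<lambda>\<omega>. runmax (Y \<omega>) k) \<in> borel_measurable (F (t (Suc k)))"
      using Suc meas_mono[OF filt tin tin tmono] by simp
    have b: "(\<lambda>\<omega>. Y \<omega> (Suc k)) \<in> borel_measurable (F (t (Suc k)))"
      using Xmeas(1)[OF tin[OF Suc.prems]] by (simp add: Yt)
    show ?case using a b by simp
  qed
  have m_meas: "(\<lambda>\<omega>. m k \<omega> powr q) \<in> borel_measurable (F (t k))" if "k \<le> N" for k q
    unfolding m_def using rm_meas[OF that] by measurable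
  have m_measM: "(\<lambda>\<omega>. m k \<omega> powr q) \<in> borel_measurable M" if "k \<le> N" for k q
    by (rule meas_M[OF filt tin[OF that] m_meas[OF that]])
  have m_nn: "0 \<le> m k \<omega>" if "\<omega> \<in> space M" for k \<omega>
    unfolding m_def using runmax_nonneg[of "Y \<omega>" k] nn that x0 x00 K T t0 Yt
    by (metis atLeastAtMost_iff dual_order.trans le_less min_def order_refl)
  have m_le: "m k \<omega> \<le> K" for k \<omega> unfolding m_def by simp
  have g_bd: "m k \<omega> powr q \<le> K powr q" if "\<omega> \<in> space M" "q \<ge> 0" for k \<omega> q
    using m_nn[OF that(1)] m_le that(2) by (intro powr_mono2) auto
  have K0: "K \<ge> 0" using K x00 by simp
  have int_g: "integrable M (\<lambda>\<omega>. m k \<omega> powr p * X s \<omega>)" if "k \<le> N" "s \<in> {0..T}" for k s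
    by (rule integrable_bdd_mult[OF Xmeas(2)[OF that(2)] m_measM[OF that(1)] _ g_bd[of _ p] not_empty])
       (use p in auto)
  show i1: "integrable M (\<lambda>\<omega>. X T \<omega> * m N \<omega> powr p)"
    using int_g[of N T] T by (simp add: mult.commute)
  show i2: "integrable M (\<lambda>\<omega>. m N \<omega> powr (p+1))"
  proof (rule integrable_const_bound[where B="K powr (p+1)"])
    show "AE x in M. norm (m N x powr (p + 1)) \<le> K powr (p + 1)"
      using g_bd[of _ "p+1" N] p by auto
    show "(\<lambda>\<omega>. m N \<omega> powr (p+1)) \<in> borel_measurable M" by (rule m_measM) simp
  qed
  define c where "c = x0 powr (p+1) / (p+1)"
  define D where "D \<omega> = X T \<omega> * m N \<omega> powr p - p/(p+1) * m N \<omega> powr (p+1)" for \<omega>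
  define S where "S \<omega> = (\<Sum>k<N. (Y \<omega> (Suc k) - Y \<omega> k) * m k \<omega> powr p)" for \<omega>
  have pw: "c + S \<omega> \<le> D \<omega>" if "\<omega> \<in> space M" for \<omega>
  proof -
    have y0: "Y \<omega> 0 = x0" using x0 that t0 Yt by simp
    have "Dv p K (Y \<omega>) 0 = c"
    proof -
      have "x0 * x0 powr p = x0 powr (p+1)"
        using x00 by (cases "x0 = 0") (auto simp: powr_add)
      moreover have "x0 powr (p+1) - p/(p+1) * x0 powr (p+1) = x0 powr (p+1) / (p+1)"
      proof -
        have "x0 powr (p+1) = (p+1) * x0 powr (p+1) / (p+1)" using p by simp
        also have "\<dots> - p/(p+1) * x0 powr (p+1) = ((p+1) * x0 powr (p+1) - p * x0 powr (p+1)) / (p+1)"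
          by (simp add: diff_divide_distrib)
        finally show ?thesis by (simp add: algebra_simps)
      qed
      ultimately show ?thesis unfolding Dv_def c_def using y0 K by (simp add: min_def)
    qed
    moreover have "Dv p K (Y \<omega>) N = D \<omega>" unfolding Dv_def D_def m_def using tN Yt by simp
    moreover have "Dv p K (Y \<omega>) N \<ge> Dv p K (Y \<omega>) 0 + S \<omega>"
      unfolding S_def m_def by (rule Dv_tele) (use y0 x00 K0 p in auto)
    ultimately show ?thesis by simp
  qed
  have int_S_term: "integrable M (\<lambda>\<omega>. (Y \<omega> (Suc k) - Y \<omega> k) * m k \<omega> powr p)" if "k < N" for k
  proof -
    have "integrable M (\<lambda>\<omega>. m k \<omega> powr p * X (t (Suc k)) \<omega> - m k \<omega> powr p * X (t k) \<omega>)"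
      using that int_g[of k "t (Suc k)"] int_g[of k "t k"] tin[of k] tin[of "Suc k"] by auto
    thus ?thesis by (simp add: Yt algebra_simps)
  qed
  have S_term_nn: "0 \<le> (\<integral>\<omega>. (Y \<omega> (Suc k) - Y \<omega> k) * m k \<omega> powr p \<partial>M)" if "k < N" for k
  proof -
    have le: "(\<integral>w. m k w powr p * X (t k) w \<partial>M) \<le> (\<integral>w. m k w powr p * X (t (Suc k)) w \<partial>M)"
      by (rule sub_step[OF P sub tin tin tmono m_meas _ g_bd[of _ p]]) (use that p in auto)
    have "(\<integral>\<omega>. (Y \<omega> (Suc k) - Y \<omega> k) * m k \<omega> powr p \<partial>M)
        = (\<integral>\<omega>. m k \<omega> powr p * X (t (Suc k)) \<omega> - m k \<omega> powr p * X (t k) \<omega> \<partial>M)"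
      by (simp add: Yt algebra_simps)
    also have "\<dots> = (\<integral>w. m k w powr p * X (t (Suc k)) w \<partial>M) - (\<integral>w. m k w powr p * X (t k) w \<partial>M)"
      using that int_g[of k "t (Suc k)"] int_g[of k "t k"] tin[of k] tin[of "Suc k"] by (subst Bochner_Integration.integral_diff) auto
    finally show ?thesis using le by simp
  qed
  have "c \<le> c + (\<integral>\<omega>. S \<omega> \<partial>M)"
  proof -
    have "(\<integral>\<omega>. S \<omega> \<partial>M) = (\<Sum>k<N. \<integral>\<omega>. (Y \<omega> (Suc k) - Y \<omega> k) * m k \<omega> powr p \<partial>M)"
      unfolding S_def by (rule Bochner_Integration.integral_sum) (use int_S_term in auto)
    also have "\<dots> \<ge> 0" by (intro sum_nonneg S_term_nn) auto
    finally show ?thesis by simp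
  qed
  also have "c + (\<integral>\<omega>. S \<omega> \<partial>M) = (\<integral>\<omega>. c + S \<omega> \<partial>M)"
    unfolding S_def using int_S_term by (subst Bochner_Integration.integral_add) (auto intro!: Bochner_Integration.integrable_sum simp: prob_space)
  also have "\<dots> \<le> (\<integral>\<omega>. D \<omega> \<partial>M)"
    using int_S_term pw i1 i2 unfolding D_def S_def
    by (intro integral_mono) (auto intro!: Bochner_Integration.integrable_sum Bochner_Integration.integrable_diff)
  also have "\<dots> = (\<integral>\<omega>. X T \<omega> * m N \<omega> powr p \<partial>M) - p/(p+1) * (\<integral>\<omega>. m N \<omega> powr (p+1) \<partial>M)"
    unfolding D_def using i1 i2 by (subst Bochner_Integration.integral_diff) auto
  finally show "p/(p+1) * (\<integral>\<omega>. m N \<omega> powr (p+1) \<partial>M) + x0 powr (p+1) / (p+1)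
       \<le> (\<integral>\<omega>. X T \<omega> * m N \<omega> powr p \<partial>M)" unfolding c_def by simp
qed


theorem mainTheorem3:
  fixes M :: "'a measure" and F :: "real \<Rightarrow> 'a measure"
    and X Q :: "real \<Rightarrow> 'a \<Rightarrow> real" and T p x0 :: real
  assumes "prob_space M"
    and "T > 0"
    and "submartingale_on M T F X"
    and "\<forall>t\<in>{0..T}. \<forall>\<omega>\<in>space M. X t \<omega> \<ge> 0"
    and "\<forall>\<omega>\<in>space M. continuous_on {0..T} (\<lambda>t. X t \<omega>)"
    and "\<forall>\<omega>\<in>space M. X 0 \<omega> = x0"
    and "p > 0"
    and "quadratic_variation_on M T X Q"
    and "(\<integral>\<^sup>+ \<omega>. stieltjes_nn_integral T (\<lambda>t. Q t \<omega>)
            (\<lambda>t. running_max X t \<omega> powr (2 * p)) \<partial>M) < \<infinity>"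
  shows "(\<integral>\<^sup>+ \<omega>. ennreal (X T \<omega> * running_max X T \<omega> powr p) \<partial>M)
         \<ge> ennreal (p / (p + 1)) * (\<integral>\<^sup>+ \<omega>. ennreal (running_max X T \<omega> powr (p + 1)) \<partial>M)
           + ennreal (x0 powr (p + 1) / (p + 1))"
proof -
  note P = assms(1) and T = assms(2) and sub = assms(3) and nn = assms(4) and cont = assms(5)
    and x0 = assms(6) and p = assms(7)
  interpret prob_space M by (rule P)
  have x00: "0 \<le> x0"
  proof -
    obtain \<omega> where "\<omega> \<in> space M" using not_empty by blast
    thus ?thesis using x0 nn T by force
  qed
  define mm where "mm n \<omega> = min (runmax (\<lambda>k. X (real k * T / real (Suc n)) \<omega>) (Suc n)) (x0 + real n)" for n \<omega>
  define MT where "MT \<omega> = running_max X T \<omega>" for \<omega>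
  define A where "A = (\<integral>\<^sup>+ \<omega>. ennreal (X T \<omega> * MT \<omega> powr p) \<partial>M)"
  define b where "b n = (\<integral>\<^sup>+ \<omega>. ennreal (mm n \<omega> powr (p+1)) \<partial>M)" for n
  define k where "k = ennreal (p / (p + 1))"
  define c where "c = ennreal (x0 powr (p + 1) / (p + 1))"
  have disc: "integrable M (\<lambda>\<omega>. X T \<omega> * mm n \<omega> powr p)"
    "integrable M (\<lambda>\<omega>. mm n \<omega> powr (p+1))"
    "p/(p+1) * (\<integral>\<omega>. mm n \<omega> powr (p+1) \<partial>M) + x0 powr (p+1) / (p+1)
       \<le> (\<integral>\<omega>. X T \<omega> * mm n \<omega> powr p \<partial>M)" for n
    using discrete[OF P sub T nn x0 p _ _ x00, of "Suc n" "x0 + real n"] unfolding mm_def by auto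
  have bdd: "bdd_above ((\<lambda>s. X s \<omega>) ` {0..T})" if "\<omega> \<in> space M" for \<omega>
    using cont that by (intro bounded_imp_bdd_above compact_imp_bounded compact_continuous_image) auto
  have mm_nn: "0 \<le> mm n \<omega>" if "\<omega> \<in> space M" for n \<omega>
  proof -
    have "0 \<le> runmax (\<lambda>k. X (real k * T / real (Suc n)) \<omega>) (Suc n)"
      by (rule runmax_nonneg) (use nn that T in auto)
    thus ?thesis unfolding mm_def using x00 by simp
  qed
  have mm_le: "mm n \<omega> \<le> MT \<omega>" if "\<omega> \<in> space M" for n \<omega>
  proof -
    have "runmax (\<lambda>k. X (real k * T / real (Suc n)) \<omega>) (Suc n) \<le> MT \<omega>"
      unfolding MT_def running_max_def
      by (rule runmax_le, rule cSup_upper[OF _ bdd[OF that]]) (rule imageI, rule grid_in[OF T], auto)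
    thus ?thesis unfolding mm_def by (simp only: min.coboundedI1)
  qed
  have step: "k * b n + c \<le> A" for n
  proof -
    have "k * b n + c = ennreal (p/(p+1) * (\<integral>\<omega>. mm n \<omega> powr (p+1) \<partial>M) + x0 powr (p+1) / (p+1))"
    proof -
      have "b n = ennreal (\<integral>\<omega>. mm n \<omega> powr (p+1) \<partial>M)"
        unfolding b_def by (rule nn_integral_eq_integral[OF disc(2)]) auto
      moreover have "0 \<le> (\<integral>\<omega>. mm n \<omega> powr (p+1) \<partial>M)" by (rule integral_nonneg_AE) auto
      moreover have "0 \<le> p/(p+1)" using p by simp
      moreover have "0 \<le> x0 powr (p+1) / (p+1)" using p by simp
      ultimately show ?thesis unfolding k_def c_def
        by (metis ennreal_mult ennreal_plus mult_nonneg_nonneg)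
    qed
    also have "\<dots> \<le> ennreal (\<integral>\<omega>. X T \<omega> * mm n \<omega> powr p \<partial>M)"
      using disc(3) by (rule ennreal_leI)
    also have "\<dots> = (\<integral>\<^sup>+ \<omega>. ennreal (X T \<omega> * mm n \<omega> powr p) \<partial>M)"
      by (rule nn_integral_eq_integral[OF disc(1), symmetric]) (use nn T in auto)
    also have "\<dots> \<le> A" unfolding A_def
    proof (rule nn_integral_mono)
      fix \<omega> assume w: "\<omega> \<in> space M"
      have "mm n \<omega> powr p \<le> MT \<omega> powr p" using mm_nn[OF w] mm_le[OF w] p by (intro powr_mono2) auto
      hence "X T \<omega> * mm n \<omega> powr p \<le> X T \<omega> * MT \<omega> powr p"
        using nn w T by (intro mult_left_mono) auto
      thus "ennreal (X T \<omega> * mm n \<omega> powr p) \<le> ennreal (X T \<omega> * MT \<omega> powr p)" by (rule ennreal_leI)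
    qed
    finally show ?thesis .
  qed
  have conv: "(\<lambda>n. mm n \<omega>) \<longlonglongrightarrow> MT \<omega>" if w: "\<omega> \<in> space M" for \<omega>
  proof -
    have g: "(\<lambda>n. runmax (\<lambda>k. X (real k * T / real (Suc n)) \<omega>) (Suc n)) \<longlonglongrightarrow> MT \<omega>"
      unfolding MT_def running_max_def using grid_conv[OF _ T, of "\<lambda>s. X s \<omega>"] cont w by auto
    have "eventually (\<lambda>n. MT \<omega> \<le> x0 + real n) sequentially"
    proof -
      have "eventually (\<lambda>n. MT \<omega> - x0 \<le> real n) sequentially"
        using eventually_ge_at_top[of "nat \<lceil>MT \<omega> - x0\<rceil>"] by eventually_elim linarith
      thus ?thesis by eventually_elim simp
    qed
    hence "eventually (\<lambda>n. runmax (\<lambda>k. X (real k * T / real (Suc n)) \<omega>) (Suc n) = mm n \<omega>) sequentially"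
    proof eventually_elim
      case (elim n)
      have "runmax (\<lambda>k. X (real k * T / real (Suc n)) \<omega>) (Suc n) \<le> MT \<omega>"
        unfolding MT_def running_max_def
        by (rule runmax_le, rule cSup_upper[OF _ bdd[OF w]]) (rule imageI, rule grid_in[OF T], auto)
      thus ?case using elim unfolding mm_def by simp
    qed
    thus ?thesis by (rule Lim_transform_eventually[OF g])
  qed
  have L: "(\<integral>\<^sup>+ \<omega>. ennreal (MT \<omega> powr (p + 1)) \<partial>M) \<le> liminf b"
  proof -
    have "(\<integral>\<^sup>+ \<omega>. ennreal (MT \<omega> powr (p + 1)) \<partial>M)
        = (\<integral>\<^sup>+ \<omega>. liminf (\<lambda>n. ennreal (mm n \<omega> powr (p+1))) \<partial>M)"
    proof (rule nn_integral_cong)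
      fix \<omega> assume w: "\<omega> \<in> space M"
      have "(\<lambda>n. mm n \<omega> powr (p+1)) \<longlonglongrightarrow> MT \<omega> powr (p+1)"
        by (rule tendsto_powr'[OF conv[OF w] tendsto_const]) (use p mm_nn[OF w] in auto)
      hence lim: "(\<lambda>n. ennreal (mm n \<omega> powr (p+1))) \<longlonglongrightarrow> ennreal (MT \<omega> powr (p+1))" by simp
      show "ennreal (MT \<omega> powr (p + 1)) = liminf (\<lambda>n. ennreal (mm n \<omega> powr (p+1)))"
        by (subst lim_imp_Liminf[OF _ lim]) simp_all
    qed
    also have "\<dots> \<le> liminf b" unfolding b_def
      by (rule nn_integral_liminf) (use borel_measurable_integrable[OF disc(2)] in measurable)
    finally show ?thesis .
  qed
  have "k * (\<integral>\<^sup>+ \<omega>. ennreal (MT \<omega> powr (p + 1)) \<partial>M) + c \<le> k * liminf b + c"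
    using L by (intro add_right_mono mult_left_mono) auto
  also have "\<dots> = liminf (\<lambda>n. k * b n + c)"
  proof (rule Liminf_compose_continuous_mono[symmetric, where f="\<lambda>x. k * x + c"])
    show "continuous_on UNIV (\<lambda>x. k * x + c)" unfolding k_def
      by (intro continuous_on_add continuous_on_const ennreal_continuous_on_cmult continuous_on_id) simp
    show "mono (\<lambda>x. k * x + c)" by (intro monoI add_right_mono mult_left_mono) auto
  qed simp
  also have "\<dots> \<le> limsup (\<lambda>n. k * b n + c)" by (rule Liminf_le_Limsup) simp
  also have "\<dots> \<le> A" by (rule Limsup_bounded) (use step in auto)
  finally show ?thesis unfolding A_def k_def c_def MT_def .
qed

end
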